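(* Let $-\tfrac12\le\alpha<1$, $n\in\mathbb{N}=\{1,2,3,\dots\}$, and $\zeta\in\mathbb{C}$ with $|\zeta|\le\frac{1}{2n-1}$. Let $f=h+\overline{g}$ be harmonic in $\mathbb{D}=\{|z|<1\}$ with $$h(z)=z+\sum_{k=2}^\infty a_kz^k,\qquad g(z)=\sum_{k=1}^\infty b_kz^k,$$ such that $\operatorname{Re}\big(1+\frac{zh''(z)}{h'(z)}\big)>\alpha$ for all $z\in\mathbb{D}$ and $g'(z)=\zeta z^nh'(z)$ for all $z\in\mathbb{D}$. Then $$|a_k|\le\frac{1}{k!}\prod_{j=2}^{k}(j-2\alpha)\qquad(k=2,3,\dots),$$ and $$|b_{n+1}|\le\frac{|\zeta|}{n+1},\qquad |b_{k+n}|\le\frac{|\zeta|}{(k+n)(k-1)!}\prod_{j=2}^{k}(j-2\alpha)\qquad(k=2,3,\dots).$$ These bounds are sharp: equality holds for the function $$f(z)=\int_0^z\frac{dt}{(1-\delta t)^{2-2\alpha}}+\overline{\int_0^z\frac{\zeta t^n}{(1-\delta t)^{2-2\alpha}}\,dt}\qquad(|\delta|=1).$$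
   Context: Powers are taken with the principal branch. *)

theory Defs
  imports "HOL-Complex_Analysis.Complex_Analysis"
begin

definition ext_h :: "real \<Rightarrow> complex \<Rightarrow> complex \<Rightarrow> complex" where
  "ext_h \<alpha> \<delta> z = contour_integral (linepath 0 z)
      (\<lambda>t. 1 / ((1 - \<delta> * t) powr complex_of_real (2 - 2 * \<alpha>)))"

definition ext_g :: "real \<Rightarrow> complex \<Rightarrow> nat \<Rightarrow> complex \<Rightarrow> complex \<Rightarrow> complex" where
  "ext_g \<alpha> \<zeta> n \<delta> z = contour_integral (linepath 0 z)
      (\<lambda>t. \<zeta> * t ^ n / ((1 - \<delta> * t) powr complex_of_real (2 - 2 * \<alpha>)))"

end

theory Submission
  imports Defs "HOL-Complex_Analysis.Complex_Analysis"
begin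


lemma coeff_bound_disc:
  fixes W :: "complex \<Rightarrow> complex"
  assumes holW: "W holomorphic_on ball 0 1" and bW: "\<forall>z\<in>ball 0 1. norm (W z) < 1"
  shows "norm ((deriv^^m) W 0) \<le> fact m"
proof -
  define X where "X = norm ((deriv^^m) W 0)"
  have r: "X * r^m \<le> fact m" if "0 < r" "r < 1" for r :: real
  proof -
    have sub: "cball 0 r \<subseteq> ball (0::complex) 1" using that by auto
    have "X \<le> fact m * 1 / r^m" unfolding X_def
    proof (rule Cauchy_inequality)
      show "W holomorphic_on ball 0 r" using holW sub by (meson ball_subset_cball holomorphic_on_subset order_trans)
      show "continuous_on (cball 0 r) W"
        using holW sub holomorphic_on_imp_continuous_on holomorphic_on_subset by blast
      show "norm (W x) \<le> 1" if "norm (0 - x) = r" for x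
        using bW that \<open>r < 1\<close> by (simp add: less_imp_le)
    qed (use that in auto)
    thus ?thesis using that by (simp add: field_simps)
  qed
  have lim: "((\<lambda>r. X * r^m) \<longlongrightarrow> X * 1^m) (at_left (1::real))"
    by (intro tendsto_intros)
  have ev: "\<forall>\<^sub>F r in at_left (1::real). X * r^m \<le> fact m"
    using eventually_at_left_real[of 0 "1::real"] by (rule eventually_mono) (use r in auto)
  have "X * 1^m \<le> fact m"
    by (rule tendsto_upperbound[OF lim ev]) simp
  thus ?thesis by (simp add: X_def)
qed



lemma norm_cayley: fixes w :: complex assumes "Re w > 0" shows "cmod (w - 1) < cmod (w + 1)"
proof -
  have "cmod (w - 1)^2 = (Re w - 1)^2 + (Im w)^2" by (simp add: cmod_power2)
  moreover have "cmod (w + 1)^2 = (Re w + 1)^2 + (Im w)^2" by (simp add: cmod_power2)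
  ultimately have "cmod (w - 1)^2 < cmod (w + 1)^2" using assms
    by (simp add: power2_eq_square algebra_simps)
  thus ?thesis by (simp add: power_less_imp_less_base)
qed

lemma root_unity:
  fixes m k :: nat assumes "m \<ge> 1"
  defines "e \<equiv> exp (2 * of_real pi * \<i> / of_nat m)"
  shows "cmod e = 1" "e ^ m = 1" "0 < k \<Longrightarrow> k < m \<Longrightarrow> e ^ k \<noteq> 1"
proof -
  show "cmod e = 1" unfolding e_def by (simp add: norm_exp_eq_Re)
  have "e ^ m = exp (of_nat m * (2 * of_real pi * \<i> / of_nat m))"
    unfolding e_def by (rule exp_of_nat_mult[symmetric])
  also have "\<dots> = exp (2 * of_real pi * \<i>)" using assms by simp
  finally show "e ^ m = 1" by simp
  assume k: "0 < k" "k < m"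
  show "e ^ k \<noteq> 1"
  proof
    assume "e ^ k = 1"
    hence "exp (of_nat k * (2 * of_real pi * \<i> / of_nat m)) = 1"
      unfolding e_def by (simp only: exp_of_nat_mult)
    then obtain n :: int where n: "Im (of_nat k * (2 * of_real pi * \<i> / of_nat m)) = real_of_int (2*n) * pi"
      by (auto simp: exp_eq_1)
    hence "real k * 2 * pi / real m = 2 * real_of_int n * pi" by simp
    hence "real k = real m * real_of_int n" using assms by (simp add: field_simps)
    hence "int k = int m * n" by (metis of_int_eq_iff of_int_mult of_int_of_nat_eq)
    moreover have "n \<ge> 1 \<or> n \<le> 0" by auto
    ultimately show False using k
      by (metis (no_types, lifting) int_ops(1) less_le_not_le mult.right_neutral mult_le_0_iff mult_left_mono of_nat_0_le_iff of_nat_less_iff not_less)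
  qed
qed



lemma carath:
  fixes q :: "complex \<Rightarrow> complex" and m :: nat
  assumes holq: "q holomorphic_on ball 0 1" and req: "\<forall>z\<in>ball 0 1. Re (q z) > 0"
    and q0: "q 0 = 1" and m: "m \<ge> 1"
  shows "norm (fps_nth (fps_expansion q 0) m) \<le> 2"
proof -
  define F where "F = fps_expansion q 0"
  have qF: "q has_fps_expansion F" using holq unfolding F_def
    by (intro has_fps_expansion_fps_expansion) auto
  have F0: "fps_nth F 0 = 1" by (simp add: F_def fps_expansion_def q0)
  define e where "e = exp (2 * of_real pi * \<i> / of_nat m)"
  have ne: "cmod e = 1" and em: "e ^ m = 1" and eneq: "\<And>k. 0 < k \<Longrightarrow> k < m \<Longrightarrow> e ^ k \<noteq> 1"
    using root_unity[OF m] unfolding e_def by auto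
  have inball: "e ^ j * z \<in> ball 0 1" if "z \<in> ball 0 1" for j z
    using that by (simp add: norm_mult norm_power ne)
  define Q where "Q = (\<lambda>z. (1 / of_nat m) * (\<Sum>j<m. (q \<circ> (\<lambda>z. e ^ j * z)) z))"
  have holQ: "Q holomorphic_on ball 0 1" unfolding Q_def
  proof (intro holomorphic_intros holomorphic_on_compose_gen[where t="ball 0 1"])
    fix j show "q holomorphic_on ball 0 1" by (rule holq)
  qed (auto intro!: inball)
  have reQ: "Re (Q z) > 0" if z: "z \<in> ball 0 1" for z
  proof -
    have "Re (Q z) = (\<Sum>j<m. Re (q (e ^ j * z))) / real m"
      by (simp add: Q_def Re_sum)
    moreover have "(\<Sum>j<m. Re (q (e ^ j * z))) > 0"
      using m req inball[OF z] by (intro sum_pos) (auto simp: lessThan_empty_iff)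
    ultimately show ?thesis using m by simp
  qed
  have Q0: "Q 0 = 1" using m by (simp add: Q_def q0)
  define FQ where "FQ = fps_const (1 / of_nat m) * (\<Sum>j<m. fps_compose F (fps_const (e ^ j) * fps_X))"
  have QF: "Q has_fps_expansion FQ" unfolding Q_def FQ_def
    by (intro has_fps_expansion_cmult_left has_fps_expansion_sum has_fps_expansion_compose qF
          has_fps_expansion_fps_X) auto
  have FQn: "FQ $ k = (1 / of_nat m) * (\<Sum>j<m. (e ^ k) ^ j) * F $ k" for k
  proof -
    have "FQ $ k = (1 / of_nat m) * (\<Sum>j<m. (e ^ j) ^ k * F $ k)"
      by (simp only: FQ_def fps_mult_left_const_nth fps_sum_nth fps_nth_compose_linear)
    also have "(\<Sum>j<m. (e ^ j) ^ k * F $ k) = (\<Sum>j<m. (e ^ k) ^ j) * F $ k"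
    proof -
      have "(\<Sum>j<m. (e ^ j) ^ k * F $ k) = (\<Sum>j<m. (e ^ k) ^ j * F $ k)"
        by (intro sum.cong refl) (metis power_mult mult.commute)
      thus ?thesis by (simp only: sum_distrib_right)
    qed
    finally show ?thesis by simp
  qed
  have FQmid: "FQ $ k = 0" if "0 < k" "k < m" for k
  proof -
    have "(e ^ k) ^ m = 1" by (metis em power_mult mult.commute power_one)
    thus ?thesis using eneq[OF that] by (simp add: FQn sum_gp_strict)
  qed
  have FQm: "FQ $ m = F $ m" using m by (simp add: FQn em)
  have FQ0: "FQ $ 0 = 1" using m by (simp add: FQn F0)
  define W where "W = (\<lambda>z. (Q z - 1) / (Q z + 1))"
  have Qnz: "Q z + 1 \<noteq> 0" if "z \<in> ball 0 1" for z
  proof -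
    have "Re (Q z + 1) > 0" using reQ[OF that] by simp
    thus ?thesis by (metis zero_complex.sel(1) less_irrefl)
  qed
  have holW: "W holomorphic_on ball 0 1" unfolding W_def
    by (intro holomorphic_intros holQ) (use Qnz in auto)
  have bW: "\<forall>z\<in>ball 0 1. norm (W z) < 1"
  proof
    fix z assume z: "z \<in> ball (0::complex) 1"
    have "cmod (Q z - 1) < cmod (Q z + 1)" by (rule norm_cayley[OF reQ[OF z]])
    thus "norm (W z) < 1" using Qnz[OF z] by (simp add: W_def norm_divide divide_less_eq)
  qed
  define FW where "FW = fps_expansion W 0"
  have WF: "W has_fps_expansion FW" using holW unfolding FW_def
    by (intro has_fps_expansion_fps_expansion) auto
  have FW0: "FW $ 0 = 0" by (simp add: FW_def fps_expansion_def W_def Q0)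
  have FWm: "norm (FW $ m) \<le> 1"
    using coeff_bound_disc[OF holW bW, of m] by (simp add: FW_def fps_expansion_def norm_divide)
  have e1: "(\<lambda>z. Q z - 1) has_fps_expansion FQ - 1"
    by (intro has_fps_expansion_diff QF) auto
  have e2: "(\<lambda>z. W z * (Q z + 1)) has_fps_expansion FW * (FQ + 1)"
    by (intro has_fps_expansion_mult has_fps_expansion_add QF WF) auto
  have ev: "eventually (\<lambda>z. W z * (Q z + 1) = Q z - 1) (nhds 0)"
  proof -
    have "eventually (\<lambda>z. z \<in> ball (0::complex) 1) (nhds 0)"
      by (intro eventually_nhds_in_open) auto
    thus ?thesis by (rule eventually_mono) (use Qnz in \<open>auto simp: W_def\<close>)
  qed
  have e3: "(\<lambda>z. Q z - 1) has_fps_expansion FW * (FQ + 1)"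
    using e2 has_fps_expansion_cong[OF ev refl] by simp
  have eq: "FQ - 1 = FW * (FQ + 1)" using fps_expansion_unique_complex[OF e1 e3] .
  have "FQ $ m = (FW * (FQ + 1)) $ m" using m by (simp add: eq [symmetric])
  also have "\<dots> = (\<Sum>i=0..m. FW $ i * (FQ + 1) $ (m - i))" by (simp add: fps_mult_nth)
  also have "\<dots> = (\<Sum>i=0..m. (if i = m then 2 * FW $ m else 0))"
  proof (rule sum.cong)
    fix i assume i: "i \<in> {0..m}"
    show "FW $ i * (FQ + 1) $ (m - i) = (if i = m then 2 * FW $ m else 0)"
    proof (cases "i = m")
      case True thus ?thesis by (simp add: FQ0)
    next
      case False
      show ?thesis
      proof (cases "i = 0")
        case True thus ?thesis using False by (simp add: FW0)
      next
        case False2: False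
        have "(FQ + 1) $ (m - i) = FQ $ (m - i)" using False i by auto
        also have "\<dots> = 0" using False False2 i by (intro FQmid) auto
        finally show ?thesis using False by simp
      qed
    qed
  qed simp
  also have "\<dots> = 2 * FW $ m" by simp
  finally have "F $ m = 2 * FW $ m" using FQm by simp
  thus ?thesis using FWm unfolding F_def by (simp add: norm_mult)
qed



lemma poch_prod: "pochhammer (2 - 2*\<alpha>) m = (\<Prod>j=2..m+1. real j - 2*\<alpha>)"
proof (induction m)
  case 0 thus ?case by simp
next
  case (Suc m)
  have "pochhammer (2 - 2*\<alpha>) (Suc m) = pochhammer (2 - 2*\<alpha>) m * (2 - 2*\<alpha> + real m)"
    by (simp add: pochhammer_Suc)
  also have "\<dots> = (\<Prod>j=2..m+1. real j - 2*\<alpha>) * (real (Suc (m+1)) - 2*\<alpha>)"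
    using Suc by simp
  also have "\<dots> = (\<Prod>j=2..Suc m+1. real j - 2*\<alpha>)"
    by (simp only: add_Suc prod.cl_ivl_Suc) simp
  finally show ?case .
qed

lemma E_rec: fixes c :: real
  shows "real k * (pochhammer c k / fact k) = c * (\<Sum>j<k. pochhammer c j / fact j)"
proof (induction k)
  case 0 thus ?case by simp
next
  case (Suc k)
  have fs: "fact (Suc k) = real (Suc k) * (fact k :: real)" by simp
  have "real (Suc k) * (pochhammer c (Suc k) / fact (Suc k)) = pochhammer c (Suc k) / fact k"
    by (simp only: fs) (simp del: of_nat_Suc)
  also have "\<dots> = pochhammer c k * (c + real k) / fact k"
    by (simp add: pochhammer_Suc)
  also have "\<dots> = c * (pochhammer c k / fact k) + real k * (pochhammer c k / fact k)"
    by (simp add: field_simps)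
  also have "\<dots> = c * (\<Sum>j<Suc k. pochhammer c j / fact j)"
    using Suc by (simp add: algebra_simps)
  finally show ?case .
qed

lemma part_a:
  fixes h :: "complex \<Rightarrow> complex" and A :: "complex fps" and \<alpha> :: real
  assumes al: "\<alpha> < 1"
    and hA: "h has_fps_expansion A" and holh: "h holomorphic_on ball 0 1"
    and A1: "A $ 1 = 1"
    and h'_nz: "\<forall>z\<in>ball 0 1. deriv h z \<noteq> 0"
    and convex: "\<forall>z\<in>ball 0 1. Re (1 + z * deriv (deriv h) z / deriv h z) > \<alpha>"
  shows "norm (fps_deriv A $ k) \<le> pochhammer (2 - 2*\<alpha>) k / fact k"
proof -
  define c where "c = 2 - 2*\<alpha>"
  define E where "E = (\<lambda>k. pochhammer c k / fact k)"
  define D where "D = fps_deriv A"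
  have hD: "deriv h has_fps_expansion D" unfolding D_def by (rule has_fps_expansion_deriv[OF hA])
  have hDD: "deriv (deriv h) has_fps_expansion fps_deriv D" by (rule has_fps_expansion_deriv[OF hD])
  have hol1: "deriv h holomorphic_on ball 0 1" by (rule holomorphic_deriv[OF holh]) auto
  have hol2: "deriv (deriv h) holomorphic_on ball 0 1" by (rule holomorphic_deriv[OF hol1]) auto
  define p where "p = (\<lambda>z. 1 + z * deriv (deriv h) z / deriv h z)"
  have holp: "p holomorphic_on ball 0 1" unfolding p_def
    by (intro holomorphic_intros hol1 hol2) (use h'_nz in auto)
  have p0: "p 0 = 1" by (simp add: p_def)
  define P where "P = fps_expansion p 0"
  have pP: "p has_fps_expansion P" unfolding P_def using holp
    by (intro has_fps_expansion_fps_expansion) auto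
  have P0: "P $ 0 = 1" by (simp add: P_def fps_expansion_def p0)
  have e1: "(\<lambda>z. (p z - 1) * deriv h z) has_fps_expansion (P - 1) * D"
    by (intro has_fps_expansion_mult has_fps_expansion_diff pP hD) auto
  have e2: "(\<lambda>z. z * deriv (deriv h) z) has_fps_expansion fps_X * fps_deriv D"
    by (intro has_fps_expansion_mult hDD has_fps_expansion_fps_X)
  have ev: "eventually (\<lambda>z. z * deriv (deriv h) z = (p z - 1) * deriv h z) (nhds 0)"
  proof -
    have "eventually (\<lambda>z. z \<in> ball (0::complex) 1) (nhds 0)"
      by (intro eventually_nhds_in_open) auto
    thus ?thesis by (rule eventually_mono) (use h'_nz in \<open>auto simp: p_def\<close>)
  qed
  have e3: "(\<lambda>z. (p z - 1) * deriv h z) has_fps_expansion fps_X * fps_deriv D"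
    using e2 has_fps_expansion_cong[OF ev refl] by simp
  have eq: "(P - 1) * D = fps_X * fps_deriv D" using fps_expansion_unique_complex[OF e1 e3] .
  define q where "q = (\<lambda>z. complex_of_real (1 / (1 - \<alpha>)) * (p z - complex_of_real \<alpha>))"
  have holq: "q holomorphic_on ball 0 1" unfolding q_def by (intro holomorphic_intros holp)
  have req: "\<forall>z\<in>ball 0 1. Re (q z) > 0"
  proof
    fix z :: complex assume z: "z \<in> ball 0 1"
    have "Re (q z) = (Re (p z) - \<alpha>) / (1 - \<alpha>)" by (simp add: q_def)
    moreover have "Re (p z) > \<alpha>" using convex z by (simp add: p_def)
    ultimately show "Re (q z) > 0" using al by simp
  qed
  have q0: "q 0 = 1" using al by (simp add: q_def p0 field_simps)
  have qQ: "q has_fps_expansion fps_const (complex_of_real (1 / (1 - \<alpha>))) * (P - fps_const (complex_of_real \<alpha>))"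
    unfolding q_def by (intro has_fps_expansion_cmult_left has_fps_expansion_diff pP has_fps_expansion_const)
  have Pbound: "norm (P $ m) \<le> c" if m: "m \<ge> 1" for m
  proof -
    have "norm (fps_expansion q 0 $ m) \<le> 2" by (rule carath[OF holq req q0 m])
    also have "fps_expansion q 0 = fps_const (complex_of_real (1 / (1 - \<alpha>))) * (P - fps_const (complex_of_real \<alpha>))"
      by (rule fps_expansion_eqI[OF qQ])
    moreover have "cmod (1 - complex_of_real \<alpha>) = 1 - \<alpha>"
      by (metis abs_of_pos al diff_gt_0_iff_gt norm_of_real of_real_1 of_real_diff)
    ultimately have "norm (P $ m) / (1 - \<alpha>) \<le> 2" using m al by (simp add: norm_mult norm_divide)
    thus ?thesis using al by (simp add: c_def field_simps)
  qed
  have rec: "of_nat (Suc k) * D $ Suc k = (\<Sum>i\<le>k. P $ Suc i * D $ (k - i))" for k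
  proof -
    have "of_nat (Suc k) * D $ Suc k = (fps_X * fps_deriv D) $ Suc k" by simp
    also have "\<dots> = ((P - 1) * D) $ Suc k" by (simp add: eq)
    also have "\<dots> = (\<Sum>i\<le>Suc k. (P - 1) $ i * D $ (Suc k - i))"
      by (simp add: fps_mult_nth atLeast0AtMost)
    also have "\<dots> = (\<Sum>i\<le>k. P $ Suc i * D $ (k - i))"
      by (subst sum.atMost_Suc_shift) (simp add: P0)
    finally show ?thesis .
  qed
  have Erec: "real k * E k = c * (\<Sum>j<k. E j)" for k unfolding E_def by (rule E_rec)
  have cpos: "c > 0" using al by (simp add: c_def)
  have main: "norm (D $ k) \<le> E k" for k
  proof (induction k rule: less_induct)
    case (less k)
    show ?case
    proof (cases k)
      case 0 thus ?thesis using A1 by (simp add: D_def E_def)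
    next
      case (Suc k')
      have "real (Suc k') * norm (D $ Suc k') = norm (\<Sum>i\<le>k'. P $ Suc i * D $ (k' - i))"
        using rec[of k'] by (metis norm_mult norm_of_nat)
      also have "\<dots> \<le> (\<Sum>i\<le>k'. norm (P $ Suc i) * norm (D $ (k' - i)))"
        by (rule order_trans[OF norm_sum]) (simp add: norm_mult)
      also have "\<dots> \<le> (\<Sum>i\<le>k'. c * E (k' - i))"
      proof (rule sum_mono)
        fix i assume i: "i \<in> {..k'}"
        have "norm (D $ (k' - i)) \<le> E (k' - i)" using less Suc by simp
        moreover have "norm (P $ Suc i) \<le> c" by (rule Pbound) simp
        ultimately show "norm (P $ Suc i) * norm (D $ (k' - i)) \<le> c * E (k' - i)"
          by (intro mult_mono) (auto simp: cpos less_imp_le)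
      qed
      also have "\<dots> = c * (\<Sum>j<Suc k'. E j)"
      proof -
        have "(\<Sum>i\<le>k'. E (k' - i)) = (\<Sum>i<Suc k'. E (Suc k' - Suc i))"
          by (simp add: lessThan_Suc_atMost)
        also have "\<dots> = (\<Sum>j<Suc k'. E j)" by (rule sum.nat_diff_reindex)
        finally show ?thesis by (simp only: sum_distrib_left[symmetric])
      qed
      also have "\<dots> = real (Suc k') * E (Suc k')" by (rule Erec[symmetric])
      finally show ?thesis using Suc by simp
    qed
  qed
  show ?thesis using main[of k] by (simp add: D_def E_def c_def)
qed



lemma ser_fps:
  fixes a :: "nat \<Rightarrow> complex" and f :: "complex \<Rightarrow> complex"
  assumes ser: "\<forall>z\<in>ball 0 1. (\<lambda>k. a k * z^k) sums f z"
  shows "fps_conv_radius (Abs_fps a) \<ge> 1"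
    and "\<And>z. z \<in> ball 0 1 \<Longrightarrow> eval_fps (Abs_fps a) z = f z"
    and "f has_fps_expansion Abs_fps a"
    and "f holomorphic_on ball 0 1"
proof -
  show rad: "fps_conv_radius (Abs_fps a) \<ge> 1" unfolding fps_conv_radius_def
  proof (rule conv_radius_geI_ex')
    fix r :: real assume "0 < r" "ereal r < 1"
    hence "complex_of_real r \<in> ball 0 1" by simp
    thus "summable (\<lambda>n. Abs_fps a $ n * complex_of_real r ^ n)"
      using ser sums_summable by fastforce
  qed
  show ev: "eval_fps (Abs_fps a) z = f z" if "z \<in> ball 0 1" for z
    using ser that unfolding eval_fps_def by (simp add: sums_iff)
  show "f has_fps_expansion Abs_fps a"
  proof (rule has_fps_expansionI)
    have "eventually (\<lambda>z. z \<in> ball (0::complex) 1) (nhds 0)"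
      by (intro eventually_nhds_in_open) auto
    thus "\<forall>\<^sub>F u in nhds 0. (\<lambda>n. Abs_fps a $ n * u ^ n) sums f u"
      by (rule eventually_mono) (use ser in auto)
  qed
  have "eval_fps (Abs_fps a) holomorphic_on ball 0 1"
    by (intro holomorphic_on_eval_fps) (auto simp: subset_eq intro!: less_le_trans[OF _ rad])
  thus "f holomorphic_on ball 0 1"
    by (rule holomorphic_transform) (use ev in auto)
qed

lemma part1:
  fixes \<alpha> :: real and n :: nat and \<zeta> :: complex
    and h g :: "complex \<Rightarrow> complex" and a b :: "nat \<Rightarrow> complex"
  assumes alpha: "\<alpha> < 1"
    and h_ser: "\<forall>z\<in>ball 0 1. (\<lambda>k. a k * z ^ k) sums h z"
    and a01: "a 1 = 1"
    and g_ser: "\<forall>z\<in>ball 0 1. (\<lambda>k. b k * z ^ k) sums g z"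
    and h'_nz: "\<forall>z\<in>ball 0 1. deriv h z \<noteq> 0"
    and convex: "\<forall>z\<in>ball 0 1. Re (1 + z * deriv (deriv h) z / deriv h z) > \<alpha>"
    and gh: "\<forall>z\<in>ball 0 1. deriv g z = \<zeta> * z ^ n * deriv h z"
  shows "(\<forall>k\<ge>2. cmod (a k) \<le> (\<Prod>j=2..k. real j - 2 * \<alpha>) / fact k)
       \<and> cmod (b (n + 1)) \<le> cmod \<zeta> / real (n + 1)
       \<and> (\<forall>k\<ge>2. cmod (b (k + n)) \<le>
              cmod \<zeta> * (\<Prod>j=2..k. real j - 2 * \<alpha>) / (real (k + n) * fact (k - 1)))"
proof -
  define A where "A = Abs_fps a"
  define G where "G = Abs_fps b"
  define D where "D = fps_deriv A"
  have hA: "h has_fps_expansion A" and holh: "h holomorphic_on ball 0 1"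
    using ser_fps[OF h_ser] by (auto simp: A_def)
  have gG: "g has_fps_expansion G" and holg: "g holomorphic_on ball 0 1"
    using ser_fps[OF g_ser] by (auto simp: G_def)
  have Db: "norm (D $ k) \<le> pochhammer (2 - 2*\<alpha>) k / fact k" for k
    unfolding D_def by (rule part_a[OF alpha hA holh _ h'_nz convex]) (simp add: A_def a01[unfolded One_nat_def])
  have Dn: "D $ k = of_nat (Suc k) * a (Suc k)" for k by (simp add: D_def A_def)
  have D0: "D $ 0 = 1" by (simp add: Dn a01[unfolded One_nat_def])
  have pp: "pochhammer (2 - 2*\<alpha>) j = (\<Prod>i=2..Suc j. real i - 2*\<alpha>)" for j
    using poch_prod[of \<alpha> j] by simp
  have conjA: "\<forall>k\<ge>2. cmod (a k) \<le> (\<Prod>j=2..k. real j - 2 * \<alpha>) / fact k"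
  proof (intro allI impI)
    fix k :: nat assume k: "k \<ge> 2"
    then obtain j where j: "k = Suc j" by (cases k) auto
    have "real (Suc j) * cmod (a (Suc j)) \<le> pochhammer (2 - 2*\<alpha>) j / fact j"
      using Db[of j] by (simp add: Dn norm_mult del: of_nat_Suc)
    hence ab: "cmod (a (Suc j)) \<le> pochhammer (2 - 2*\<alpha>) j / (fact j * real (Suc j))"
      by (simp add: field_simps del: of_nat_Suc)
    have fk: "fact k = (fact j * real (Suc j) :: real)" unfolding j by (simp only: fact_Suc mult.commute)
    have pk: "(\<Prod>j=2..k. real j - 2 * \<alpha>) = pochhammer (2 - 2*\<alpha>) j" unfolding j pp ..
    show "cmod (a k) \<le> (\<Prod>j=2..k. real j - 2 * \<alpha>) / fact k" unfolding pk fk unfolding j using ab .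
  qed
  have e1: "deriv g has_fps_expansion fps_deriv G" by (rule has_fps_expansion_deriv[OF gG])
  have e2: "(\<lambda>z. \<zeta> * z ^ n * deriv h z) has_fps_expansion fps_const \<zeta> * fps_X ^ n * D"
    unfolding D_def
    by (intro has_fps_expansion_mult has_fps_expansion_cmult_left has_fps_expansion_deriv hA
        has_fps_expansion_fps_X_power)
  have ev: "eventually (\<lambda>z. \<zeta> * z ^ n * deriv h z = deriv g z) (nhds 0)"
  proof -
    have "eventually (\<lambda>z. z \<in> ball (0::complex) 1) (nhds 0)"
      by (intro eventually_nhds_in_open) auto
    thus ?thesis by (rule eventually_mono) (use gh in auto)
  qed
  have e3: "deriv g has_fps_expansion fps_const \<zeta> * fps_X ^ n * D"
    using e2 has_fps_expansion_cong[OF ev refl] by simp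
  have eq: "fps_deriv G = fps_const \<zeta> * fps_X ^ n * D" using fps_expansion_unique_complex[OF e1 e3] .
  have bform: "of_nat (Suc j + n) * b (Suc j + n) = \<zeta> * D $ j" for j
  proof -
    have "of_nat (Suc j + n) * b (Suc j + n) = fps_deriv G $ (j + n)" by (simp add: G_def)
    also have "\<dots> = \<zeta> * (fps_X ^ n * D) $ (j + n)" by (simp add: eq mult.assoc)
    also have "\<dots> = \<zeta> * D $ j" by (simp add: fps_X_power_mult_nth)
    finally show ?thesis .
  qed
  have bnorm: "cmod (b (Suc j + n)) = cmod \<zeta> * cmod (D $ j) / real (Suc j + n)" for j
  proof -
    have "real (Suc j + n) * cmod (b (Suc j + n)) = cmod \<zeta> * cmod (D $ j)"
      using arg_cong[OF bform[of j], of norm] by (simp add: norm_mult del: of_nat_Suc of_nat_add)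
    thus ?thesis by (simp add: field_simps del: of_nat_Suc of_nat_add)
  qed
  have conjB1: "cmod (b (n + 1)) \<le> cmod \<zeta> / real (n + 1)"
    using bnorm[of 0] by (simp add: D0)
  have conjB2: "\<forall>k\<ge>2. cmod (b (k + n)) \<le>
              cmod \<zeta> * (\<Prod>j=2..k. real j - 2 * \<alpha>) / (real (k + n) * fact (k - 1))"
  proof (intro allI impI)
    fix k :: nat assume k: "k \<ge> 2"
    then obtain j where j: "k = Suc j" by (cases k) auto
    have "cmod \<zeta> * cmod (D $ j) \<le> cmod \<zeta> * (pochhammer (2 - 2*\<alpha>) j / fact j)"
      by (intro mult_left_mono Db) auto
    hence bb: "cmod (b (Suc j + n)) \<le> cmod \<zeta> * (pochhammer (2 - 2*\<alpha>) j / fact j) / real (Suc j + n)"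
      unfolding bnorm by (intro divide_right_mono) auto
    have pk: "(\<Prod>j=2..k. real j - 2 * \<alpha>) = pochhammer (2 - 2*\<alpha>) j" unfolding j pp ..
    show "cmod (b (k + n)) \<le> cmod \<zeta> * (\<Prod>j=2..k. real j - 2 * \<alpha>) / (real (k + n) * fact (k - 1))"
      unfolding pk unfolding j using bb by (simp add: mult.commute del: of_nat_Suc of_nat_add)
  qed
  show ?thesis using conjA conjB1 conjB2 by blast
qed



lemma radius_antideriv:
  fixes F :: "complex fps"
  assumes "fps_conv_radius (fps_deriv F) \<ge> 1"
  shows "fps_conv_radius F \<ge> 1"
  unfolding fps_conv_radius_def
proof (rule conv_radius_geI_ex')
  fix r :: real assume r: "0 < r" "ereal r < 1"
  hence r1: "r < 1" by simp
  have "ereal (norm (complex_of_real r)) < fps_conv_radius (fps_deriv F)"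
    using less_le_trans[OF r(2) assms] r(1) by simp
  hence sd: "summable (\<lambda>k. norm (fps_deriv F $ k * complex_of_real r ^ k))"
    by (rule norm_summable_fps)
  have "summable (\<lambda>k. F $ Suc k * complex_of_real r ^ Suc k)"
  proof (rule summable_comparison_test'[OF sd])
    fix k :: nat
    have "norm (F $ Suc k * complex_of_real r ^ Suc k)
        = r / real (Suc k) * norm (fps_deriv F $ k * complex_of_real r ^ k)"
      using r by (simp add: norm_mult norm_power field_simps del: of_nat_Suc)
    also have "\<dots> \<le> 1 * norm (fps_deriv F $ k * complex_of_real r ^ k)"
      using r r1 by (intro mult_right_mono) (auto simp: field_simps)
    finally show "norm (F $ Suc k * complex_of_real r ^ Suc k) \<le> norm (fps_deriv F $ k * complex_of_real r ^ k)"
      by simp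
  qed
  thus "summable (\<lambda>k. F $ k * complex_of_real r ^ k)"
    by (subst summable_Suc_iff[symmetric])
qed

lemma re_ineq:
  fixes u :: complex and c :: real
  assumes u: "cmod u < 1" and c: "c > 0"
  shows "Re (1 + complex_of_real c * (u / (1 - u))) > 1 - c / 2"
proof -
  define x where "x = Re u"
  define y where "y = Im u"
  have "cmod u ^ 2 < 1 ^ 2" by (rule power_strict_mono) (use u in auto)
  hence xy: "x^2 + y^2 < 1" unfolding x_def y_def by (simp add: cmod_power2)
  have "x^2 < 1" using xy zero_le_power2[of y] by linarith
  have "x < 1"
  proof (rule ccontr)
    assume "\<not> x < 1"
    hence "1 \<le> x^2" by (simp add: one_le_power)
    thus False using \<open>x^2 < 1\<close> by simp
  qed
  hence "(1 - x)^2 > 0" by simp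
  hence den: "(1 - x)^2 + y^2 > 0" using zero_le_power2[of y] by linarith
  have "Re (u / (1 - u)) = (x * (1 - x) - y * y) / ((1 - x)^2 + y^2)"
    by (simp add: Re_divide x_def y_def)
  also have "\<dots> > - 1 / 2"
  proof -
    have "x * (1 - x) - y * y > - 1 / 2 * ((1 - x)^2 + y^2)"
      using xy by (simp add: power2_eq_square algebra_simps)
    thus ?thesis using den by (simp add: less_divide_eq)
  qed
  finally have "Re (u / (1 - u)) > -1/2" .
  hence "c * Re (u / (1 - u)) > c * (-1/2)" using c by (intro mult_strict_left_mono) auto
  moreover have "Re (complex_of_real c * (u / (1 - u))) = c * Re (u / (1 - u))"
    by (simp only: times_complex.sel Re_complex_of_real Im_complex_of_real mult_zero_left diff_zero)
  ultimately show ?thesis by simp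
qed



lemma part2:
  fixes \<alpha> :: real and n :: nat and \<zeta> \<delta> :: complex
  assumes al: "\<alpha> < 1" and dn: "cmod \<delta> = 1"
  shows "\<exists>A B. (\<forall>z\<in>ball 0 1. (\<lambda>k. A k * z ^ k) sums ext_h \<alpha> \<delta> z)
                 \<and> (\<forall>z\<in>ball 0 1. (\<lambda>k. B k * z ^ k) sums ext_g \<alpha> \<zeta> n \<delta> z)
                 \<and> A 0 = 0 \<and> A 1 = 1 \<and> B 0 = 0
                 \<and> (\<forall>z\<in>ball 0 1. deriv (ext_h \<alpha> \<delta>) z \<noteq> 0
                      \<and> Re (1 + z * deriv (deriv (ext_h \<alpha> \<delta>)) z / deriv (ext_h \<alpha> \<delta>) z) > \<alpha>
                      \<and> deriv (ext_g \<alpha> \<zeta> n \<delta>) z = \<zeta> * z ^ n * deriv (ext_h \<alpha> \<delta>) z)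
                 \<and> (\<forall>k\<ge>2. cmod (A k) = (\<Prod>j=2..k. real j - 2 * \<alpha>) / fact k)
                 \<and> cmod (B (n + 1)) = cmod \<zeta> / real (n + 1)
                 \<and> (\<forall>k\<ge>2. cmod (B (k + n)) =
                      cmod \<zeta> * (\<Prod>j=2..k. real j - 2 * \<alpha>) / (real (k + n) * fact (k - 1)))"
proof -
  define c where "c = 2 - 2*\<alpha>"
  have cpos: "c > 0" using al by (simp add: c_def)
  have dnz: "\<delta> \<noteq> 0" using dn by auto
  define p where "p = (\<lambda>k. complex_of_real (pochhammer c k / fact k) * \<delta> ^ k)"
  define \<phi> where "\<phi> = (\<lambda>t. 1 / ((1 - \<delta> * t) powr complex_of_real (2 - 2 * \<alpha>)))"
  have pser: "\<forall>t\<in>ball 0 1. (\<lambda>k. p k * t^k) sums \<phi> t"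
  proof
    fix t :: complex assume t: "t \<in> ball 0 1"
    have "norm (-\<delta>*t) < 1" using t dn by (simp add: norm_mult)
    from gen_binomial_complex[OF this, of "- complex_of_real c"]
    have s: "(\<lambda>k. ((- complex_of_real c) gchoose k) * (-\<delta>*t)^k) sums (1 + -\<delta>*t) powr (- complex_of_real c)" .
    have tm: "((- complex_of_real c) gchoose k) * (-\<delta>*t)^k = p k * t^k" for k
    proof -
      have "((- complex_of_real c) gchoose k) = (-1)^k * (complex_of_real (pochhammer c k) / fact k)"
        by (simp add: gbinomial_pochhammer pochhammer_of_real)
      moreover have "(-\<delta>*t)^k = (-1)^k * (\<delta>^k * t^k)" by (simp add: power_mult_distrib power_minus[of "\<delta>*t"])
      moreover have "((-1::complex)^k * (-1)^k) = 1" by (simp flip: power_mult_distrib)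
      ultimately have "((- complex_of_real c) gchoose k) * (-\<delta>*t)^k
          = ((-1)^k * (complex_of_real (pochhammer c k) / fact k)) * ((-1)^k * (\<delta>^k * t^k))"
        by (simp only:)
      also have "\<dots> = ((-1::complex)^k * (-1)^k) * ((complex_of_real (pochhammer c k) / fact k) * (\<delta>^k * t^k))"
        by (simp only: ac_simps)
      also have "\<dots> = p k * t^k" unfolding p_def
        by (simp add: \<open>((-1::complex)^k * (-1)^k) = 1\<close>)
      finally show ?thesis .
    qed
    have "(1 + -\<delta>*t) powr (- complex_of_real c) = 1 / ((1 - \<delta>*t) powr complex_of_real c)"
      by (simp add: powr_minus divide_inverse)
    also have "\<dots> = \<phi> t" unfolding \<phi>_def c_def ..
    finally have "(1 + -\<delta>*t) powr (- complex_of_real c) = \<phi> t" .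
    thus "(\<lambda>k. p k * t^k) sums \<phi> t" using s tm by simp
  qed
  define Fp where "Fp = Abs_fps p"
  have radp: "fps_conv_radius Fp \<ge> 1" and evp: "\<And>z. z \<in> ball 0 1 \<Longrightarrow> eval_fps Fp z = \<phi> z"
    using ser_fps[OF pser] by (auto simp: Fp_def)
  define A where "A = (\<lambda>k. if k = 0 then 0 else p (k - 1) / of_nat k)"
  define B where "B = (\<lambda>k. if k \<le> n then 0 else \<zeta> * p (k - n - 1) / of_nat k)"
  define FA where "FA = Abs_fps A"
  define FB where "FB = Abs_fps B"
  have dFA: "fps_deriv FA = Fp"
    by (simp add: fps_eq_iff FA_def A_def Fp_def del: of_nat_Suc of_nat_add)
  have dFB: "fps_deriv FB = fps_const \<zeta> * fps_X ^ n * Fp"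
  proof (rule fps_ext)
    fix k
    have "(fps_const \<zeta> * fps_X ^ n * Fp) $ k = \<zeta> * (if k < n then 0 else p (k - n))"
      by (simp only: mult.assoc fps_mult_left_const_nth fps_X_power_mult_nth) (simp add: Fp_def)
    moreover have "fps_deriv FB $ k = \<zeta> * (if k < n then 0 else p (k - n))"
      by (auto simp: FB_def B_def simp del: of_nat_Suc of_nat_add)
    ultimately show "fps_deriv FB $ k = (fps_const \<zeta> * fps_X ^ n * Fp) $ k" by simp
  qed
  have inr: "ereal (norm z) < R" if "z \<in> ball 0 1" "R \<ge> 1" for z and R :: ereal
    using that by (intro less_le_trans[OF _ that(2)]) auto
  have radA: "fps_conv_radius FA \<ge> 1" by (rule radius_antideriv) (simp add: dFA radp)
  have radC: "fps_conv_radius (fps_const \<zeta> * fps_X ^ n) \<ge> 1"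
    using fps_conv_radius_mult[of "fps_const \<zeta>" "fps_X ^ n"] by simp
  have radDB: "fps_conv_radius (fps_deriv FB) \<ge> 1" unfolding dFB
    using fps_conv_radius_mult[of "fps_const \<zeta> * fps_X ^ n" Fp] radC radp
    by (meson min.bounded_iff order_trans)
  have radB: "fps_conv_radius FB \<ge> 1" by (rule radius_antideriv[OF radDB])
  have radDp: "fps_conv_radius (fps_deriv Fp) \<ge> 1" using fps_conv_radius_deriv[of Fp] radp by simp
  have evDB: "eval_fps (fps_deriv FB) z = \<zeta> * z ^ n * \<phi> z" if z: "z \<in> ball 0 1" for z
  proof -
    have "eval_fps (fps_deriv FB) z = eval_fps (fps_const \<zeta> * fps_X ^ n) z * eval_fps Fp z"
      unfolding dFB by (rule eval_fps_mult) (use inr[OF z radC] inr[OF z radp] in auto)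
    also have "eval_fps (fps_const \<zeta> * fps_X ^ n) z = \<zeta> * z ^ n"
      by (subst eval_fps_mult) auto
    finally show ?thesis using evp[OF z] by simp
  qed
  have derA: "(eval_fps FA has_field_derivative \<phi> z) (at z within S)" if z: "z \<in> ball 0 1" for z S
    using has_field_derivative_eval_fps[OF inr[OF z radA], of S] by (simp add: dFA evp[OF z])
  have derB: "(eval_fps FB has_field_derivative (\<zeta> * z ^ n / ((1 - \<delta> * z) powr complex_of_real (2 - 2 * \<alpha>)))) (at z within S)"
    if z: "z \<in> ball 0 1" for z S
    using has_field_derivative_eval_fps[OF inr[OF z radB], of S] by (simp add: evDB[OF z] \<phi>_def)
  have segsub: "path_image (linepath 0 z) \<subseteq> ball 0 1" if "z \<in> ball 0 1" for z
    unfolding path_image_linepath by (rule closed_segment_subset) (use that in auto)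
  have hext: "ext_h \<alpha> \<delta> z = eval_fps FA z" if z: "z \<in> ball 0 1" for z
  proof -
    have "(\<phi> has_contour_integral (eval_fps FA (pathfinish (linepath 0 z)) - eval_fps FA (pathstart (linepath 0 z)))) (linepath 0 z)"
      by (rule contour_integral_primitive[OF derA valid_path_linepath segsub[OF z]])
    hence "contour_integral (linepath 0 z) \<phi> = eval_fps FA z - eval_fps FA 0"
      by (simp add: contour_integral_unique)
    thus ?thesis by (simp add: ext_h_def \<phi>_def eval_fps_at_0 FA_def A_def)
  qed
  have gext: "ext_g \<alpha> \<zeta> n \<delta> z = eval_fps FB z" if z: "z \<in> ball 0 1" for z
  proof -
    have "((\<lambda>t. \<zeta> * t ^ n / ((1 - \<delta> * t) powr complex_of_real (2 - 2 * \<alpha>))) has_contour_integral (eval_fps FB (pathfinish (linepath 0 z)) - eval_fps FB (pathstart (linepath 0 z)))) (linepath 0 z)"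
      by (rule contour_integral_primitive[OF derB valid_path_linepath segsub[OF z]])
    hence "ext_g \<alpha> \<zeta> n \<delta> z = eval_fps FB z - eval_fps FB 0"
      unfolding ext_g_def by (simp add: contour_integral_unique)
    thus ?thesis by (simp add: eval_fps_at_0 FB_def B_def)
  qed
  have sA: "\<forall>z\<in>ball 0 1. (\<lambda>k. A k * z ^ k) sums ext_h \<alpha> \<delta> z"
    using sums_eval_fps[OF inr[OF _ radA]] hext by (simp add: FA_def)
  have sB: "\<forall>z\<in>ball 0 1. (\<lambda>k. B k * z ^ k) sums ext_g \<alpha> \<zeta> n \<delta> z"
    using sums_eval_fps[OF inr[OF _ radB]] gext by (simp add: FB_def)
  have ob: "open (ball (0::complex) 1)" by simp
  have dh: "deriv (ext_h \<alpha> \<delta>) z = eval_fps Fp z" if z: "z \<in> ball 0 1" for z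
  proof -
    have "(ext_h \<alpha> \<delta> has_field_derivative \<phi> z) (at z)"
      by (rule has_field_derivative_transform_within_open[OF derA[OF z] ob z]) (simp add: hext)
    thus ?thesis using evp[OF z] by (simp add: DERIV_imp_deriv)
  qed
  have ddh: "deriv (deriv (ext_h \<alpha> \<delta>)) z = eval_fps (fps_deriv Fp) z" if z: "z \<in> ball 0 1" for z
  proof -
    have "(deriv (ext_h \<alpha> \<delta>) has_field_derivative eval_fps (fps_deriv Fp) z) (at z)"
      by (rule has_field_derivative_transform_within_open[OF has_field_derivative_eval_fps[OF inr[OF z radp]] ob z])
         (simp add: dh)
    thus ?thesis by (simp add: DERIV_imp_deriv)
  qed
  have dg: "deriv (ext_g \<alpha> \<zeta> n \<delta>) z = \<zeta> * z ^ n * deriv (ext_h \<alpha> \<delta>) z" if z: "z \<in> ball 0 1" for z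
  proof -
    have "(ext_g \<alpha> \<zeta> n \<delta> has_field_derivative eval_fps (fps_deriv FB) z) (at z)"
      by (rule has_field_derivative_transform_within_open[OF has_field_derivative_eval_fps[OF inr[OF z radB]] ob z])
         (simp add: gext)
    thus ?thesis using evDB[OF z] dh[OF z] evp[OF z] by (simp add: DERIV_imp_deriv)
  qed
  have ODEfps: "(1 - fps_const \<delta> * fps_X) * fps_deriv Fp = fps_const (complex_of_real c * \<delta>) * Fp"
  proof (rule fps_ext)
    fix k
    have rid: "real (Suc k) * (pochhammer c (Suc k) / fact (Suc k)) = (c + real k) * (pochhammer c k / fact k)"
    proof -
      have fs: "fact (Suc k) = real (Suc k) * (fact k :: real)" by simp
      show ?thesis by (simp only: fs pochhammer_Suc) (simp del: of_nat_Suc)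
    qed
    have pk1: "of_nat (Suc k) * p (Suc k) = \<delta> * (complex_of_real c + of_nat k) * p k"
    proof -
      have "of_nat (Suc k) * p (Suc k) = complex_of_real (real (Suc k) * (pochhammer c (Suc k) / fact (Suc k))) * \<delta> ^ Suc k"
        by (simp add: p_def del: of_nat_Suc)
      also have "\<dots> = complex_of_real ((c + real k) * (pochhammer c k / fact k)) * \<delta> ^ Suc k"
        by (simp only: rid)
      also have "\<dots> = \<delta> * (complex_of_real c + of_nat k) * p k" by (simp add: p_def)
      finally show ?thesis .
    qed
    have "((1 - fps_const \<delta> * fps_X) * fps_deriv Fp) $ k = fps_deriv Fp $ k - \<delta> * (fps_X * fps_deriv Fp) $ k"
      by (simp add: algebra_simps)
    also have "\<dots> = of_nat (Suc k) * p (Suc k) - \<delta> * of_nat k * p k"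
      by (cases k) (simp_all add: Fp_def del: of_nat_Suc)
    also have "\<dots> = complex_of_real c * \<delta> * p k" unfolding pk1 by (simp add: algebra_simps)
    also have "\<dots> = (fps_const (complex_of_real c * \<delta>) * Fp) $ k" by (simp add: Fp_def)
    finally show "((1 - fps_const \<delta> * fps_X) * fps_deriv Fp) $ k = (fps_const (complex_of_real c * \<delta>) * Fp) $ k" .
  qed
  have ODE: "(1 - \<delta> * z) * eval_fps (fps_deriv Fp) z = complex_of_real c * \<delta> * eval_fps Fp z"
    if z: "z \<in> ball 0 1" for z
  proof -
    have r1: "fps_conv_radius (1 - fps_const \<delta> * fps_X) \<ge> 1"
      using fps_conv_radius_diff[of 1 "fps_const \<delta> * fps_X"] by (simp add: fps_conv_radius_cmult_left dnz)
    have "eval_fps ((1 - fps_const \<delta> * fps_X) * fps_deriv Fp) z = eval_fps (1 - fps_const \<delta> * fps_X) z * eval_fps (fps_deriv Fp) z"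
      by (rule eval_fps_mult) (use inr[OF z r1] inr[OF z radDp] in auto)
    also have "eval_fps (1 - fps_const \<delta> * fps_X) z = 1 - \<delta> * z"
      by (subst eval_fps_diff) (auto simp: eval_fps_mult fps_conv_radius_cmult_left dnz)
    finally have "(1 - \<delta> * z) * eval_fps (fps_deriv Fp) z = eval_fps (fps_const (complex_of_real c * \<delta>) * Fp) z"
      by (simp add: ODEfps)
    also have "\<dots> = complex_of_real c * \<delta> * eval_fps Fp z"
      by (subst eval_fps_mult) (use inr[OF z radp] in auto)
    finally show ?thesis .
  qed
  have phinz: "\<phi> z \<noteq> 0" if z: "z \<in> ball 0 1" for z
  proof -
    have "1 - \<delta> * z \<noteq> 0" using z dn by (metis dist_0_norm mem_ball norm_mult mult_1 right_minus_eq norm_one less_irrefl)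
    thus ?thesis by (simp add: \<phi>_def powr_def)
  qed
  have conv: "Re (1 + z * deriv (deriv (ext_h \<alpha> \<delta>)) z / deriv (ext_h \<alpha> \<delta>) z) > \<alpha>" if z: "z \<in> ball 0 1" for z
  proof -
    have u: "cmod (\<delta> * z) < 1" using z dn by (simp add: norm_mult)
    hence nz: "1 - \<delta> * z \<noteq> 0" by (metis norm_one right_minus_eq less_irrefl)
    have e0: "eval_fps Fp z \<noteq> 0" using phinz[OF z] evp[OF z] by simp
    have "z * deriv (deriv (ext_h \<alpha> \<delta>)) z / deriv (ext_h \<alpha> \<delta>) z
          = z * eval_fps (fps_deriv Fp) z / eval_fps Fp z" by (simp add: dh[OF z] ddh[OF z])
    also have "\<dots> = complex_of_real c * (\<delta> * z / (1 - \<delta> * z))"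
    proof -
      have E1: "eval_fps (fps_deriv Fp) z = complex_of_real c * \<delta> * eval_fps Fp z / (1 - \<delta> * z)"
        using ODE[OF z] nz by (simp add: eq_divide_eq mult.commute)
      show ?thesis unfolding E1 using nz e0 by (simp add: field_simps)
    qed
    finally have "Re (1 + z * deriv (deriv (ext_h \<alpha> \<delta>)) z / deriv (ext_h \<alpha> \<delta>) z)
        = Re (1 + complex_of_real c * (\<delta> * z / (1 - \<delta> * z)))" by simp
    also have "\<dots> > 1 - c / 2" by (rule re_ineq[OF u cpos])
    finally have "Re (1 + z * deriv (deriv (ext_h \<alpha> \<delta>)) z / deriv (ext_h \<alpha> \<delta>) z) > 1 - c / 2" .
    moreover have "1 - c / 2 = \<alpha>" by (simp add: c_def field_simps)
    ultimately show ?thesis by simp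
  qed
  have dhnz: "deriv (ext_h \<alpha> \<delta>) z \<noteq> 0" if z: "z \<in> ball 0 1" for z
    using dh[OF z] evp[OF z] phinz[OF z] by simp
  have np: "cmod (p k) = pochhammer c k / fact k" for k
  proof -
    have "pochhammer c k > 0" using cpos by (rule pochhammer_pos)
    thus ?thesis unfolding p_def norm_mult norm_power dn norm_of_real by simp
  qed
  have pp: "pochhammer c j = (\<Prod>i=2..Suc j. real i - 2*\<alpha>)" for j
    using poch_prod[of \<alpha> j] by (simp add: c_def)
  have cA: "\<forall>k\<ge>2. cmod (A k) = (\<Prod>j=2..k. real j - 2 * \<alpha>) / fact k"
  proof (intro allI impI)
    fix k :: nat assume k: "k \<ge> 2"
    then obtain j where j: "k = Suc j" by (cases k) auto
    have "cmod (A k) = pochhammer c j / (fact j * real (Suc j))"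
      by (simp add: A_def j norm_divide np del: of_nat_Suc)
    also have "\<dots> = pochhammer c j / fact (Suc j)" by (simp only: fact_Suc mult.commute)
    also have "\<dots> = (\<Prod>j=2..k. real j - 2 * \<alpha>) / fact k" by (simp only: pp j)
    finally show "cmod (A k) = (\<Prod>j=2..k. real j - 2 * \<alpha>) / fact k" .
  qed
  have cB1: "cmod (B (n + 1)) = cmod \<zeta> / real (n + 1)"
  proof -
    have "B (n + 1) = \<zeta> * p 0 / of_nat (n + 1)" by (simp add: B_def)
    moreover have "cmod (of_nat (n + 1) :: complex) = real (n + 1)" by (rule norm_of_nat)
    ultimately show ?thesis by (simp only: norm_mult norm_divide np) simp
  qed
  have cB2: "\<forall>k\<ge>2. cmod (B (k + n)) =
                      cmod \<zeta> * (\<Prod>j=2..k. real j - 2 * \<alpha>) / (real (k + n) * fact (k - 1))"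
  proof (intro allI impI)
    fix k :: nat assume k: "k \<ge> 2"
    then obtain j where j: "k = Suc j" by (cases k) auto
    have "cmod (B k') = cmod \<zeta> * (pochhammer c j / fact j) / real k'" if "k' = Suc j + n" for k'
      using that by (simp add: B_def norm_mult norm_divide np del: of_nat_Suc of_nat_add)
    hence "cmod (B (k + n)) = cmod \<zeta> * (pochhammer c j / fact j) / real (k + n)" by (simp add: j)
    also have "\<dots> = cmod \<zeta> * (\<Prod>j=2..k. real j - 2 * \<alpha>) / (real (k + n) * fact (k - 1))"
      by (simp add: pp j del: of_nat_Suc of_nat_add)
    finally show "cmod (B (k + n)) = cmod \<zeta> * (\<Prod>j=2..k. real j - 2 * \<alpha>) / (real (k + n) * fact (k - 1))" .
  qed
  have A0: "A 0 = 0" and A1: "A 1 = 1" and B0: "B 0 = 0" by (simp_all add: A_def B_def p_def)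
  show ?thesis
    by (rule exI[of _ A], rule exI[of _ B]) (use sA sB A0 A1 B0 dhnz conv dg cA cB1 cB2 in blast)
qed


theorem theorem3p1:
  fixes \<alpha> :: real and n :: nat and \<zeta> :: complex
    and h g :: "complex \<Rightarrow> complex" and a b :: "nat \<Rightarrow> complex"
  assumes alpha: "-1/2 \<le> \<alpha>" "\<alpha> < 1"
    and n: "n \<ge> 1"
    and zeta: "cmod \<zeta> \<le> 1 / (2 * real n - 1)"
    and h_ser: "\<forall>z\<in>ball 0 1. (\<lambda>k. a k * z ^ k) sums h z"
    and a01: "a 0 = 0" "a 1 = 1"
    and g_ser: "\<forall>z\<in>ball 0 1. (\<lambda>k. b k * z ^ k) sums g z"
    and b0: "b 0 = 0"
    and h'_nz: "\<forall>z\<in>ball 0 1. deriv h z \<noteq> 0"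
    and convex: "\<forall>z\<in>ball 0 1. Re (1 + z * deriv (deriv h) z / deriv h z) > \<alpha>"
    and gh: "\<forall>z\<in>ball 0 1. deriv g z = \<zeta> * z ^ n * deriv h z"
  shows "(\<forall>k\<ge>2. cmod (a k) \<le> (\<Prod>j=2..k. real j - 2 * \<alpha>) / fact k)
       \<and> cmod (b (n + 1)) \<le> cmod \<zeta> / real (n + 1)
       \<and> (\<forall>k\<ge>2. cmod (b (k + n)) \<le>
              cmod \<zeta> * (\<Prod>j=2..k. real j - 2 * \<alpha>) / (real (k + n) * fact (k - 1)))
       \<and> (\<forall>\<delta>. cmod \<delta> = 1 \<longrightarrow>
            (\<exists>A B. (\<forall>z\<in>ball 0 1. (\<lambda>k. A k * z ^ k) sums ext_h \<alpha> \<delta> z)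
                 \<and> (\<forall>z\<in>ball 0 1. (\<lambda>k. B k * z ^ k) sums ext_g \<alpha> \<zeta> n \<delta> z)
                 \<and> A 0 = 0 \<and> A 1 = 1 \<and> B 0 = 0
                 \<and> (\<forall>z\<in>ball 0 1. deriv (ext_h \<alpha> \<delta>) z \<noteq> 0
                      \<and> Re (1 + z * deriv (deriv (ext_h \<alpha> \<delta>)) z / deriv (ext_h \<alpha> \<delta>) z) > \<alpha>
                      \<and> deriv (ext_g \<alpha> \<zeta> n \<delta>) z = \<zeta> * z ^ n * deriv (ext_h \<alpha> \<delta>) z)
                 \<and> (\<forall>k\<ge>2. cmod (A k) = (\<Prod>j=2..k. real j - 2 * \<alpha>) / fact k)
                 \<and> cmod (B (n + 1)) = cmod \<zeta> / real (n + 1)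
                 \<and> (\<forall>k\<ge>2. cmod (B (k + n)) =
                      cmod \<zeta> * (\<Prod>j=2..k. real j - 2 * \<alpha>) / (real (k + n) * fact (k - 1)))))"
  proof -
  have P1: "(\<forall>k\<ge>2. cmod (a k) \<le> (\<Prod>j=2..k. real j - 2 * \<alpha>) / fact k)
       \<and> cmod (b (n + 1)) \<le> cmod \<zeta> / real (n + 1)
       \<and> (\<forall>k\<ge>2. cmod (b (k + n)) \<le>
              cmod \<zeta> * (\<Prod>j=2..k. real j - 2 * \<alpha>) / (real (k + n) * fact (k - 1)))"
    by (rule part1[OF alpha(2) h_ser a01(2) g_ser h'_nz convex gh])
  show ?thesis using P1 part2[OF alpha(2)] by blast
qed

end
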